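(* For any finite graph $G=(V,E)$ there exists a sequence of graphs $(G_n)_{n\in\mathbb{N}}$ with $G_0=G$ and $G_n$ a $2$-lift of $G_{n-1}$ for $n\ge 1$ (so $G_n$ is a $2^n$-lift of $G$, with covering map $\pi_n:G_n\to G$) such that for every $v\in V$ and every choice of $v_n\in\pi_n^{-1}(v)$, the rooted graphs $(G_n,v_n)$ converge to $(T(G),v)$ in $\mathcal{G}_\star$.
   Context: A $2$-lift of a loopless graph $G$ is a graph on $V\times\{0,1\}$ in which each edge $(u,v)$ of $G$ is replaced either by $((u,0),(v,0)),((u,1),(v,1))$ or by $((u,0),(v,1)),((u,1),(v,0))$; the covering map projects $(u,i)\mapsto u$. $(T(G),v)$ is the tree of finite non-backtracking walks in $G$ starting at $v$ (walks adjacent if one extends the other by one step), rooted at the empty walk. $\mathcal{G}_\star$ is the set of locally finite connected rooted graphs up to rooted isomorphism (a rooted graph $(H,o)$ being identified with the connected component of $o$), with the distance $1/(1+r)$ where $r=\sup\{h: [H,o]_h\equiv[H',o']_h\}$ and $[H,o]_h$ is the rooted subgraph induced by vertices within graph distance $h$ of $o$. *)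

theory Defs
  imports Complex_Main "HOL-Library.Extended_Nat"
begin

text \<open>Graphs: a vertex set together with a (directed-pair) edge relation.
  Undirected simple graphs are those with symmetric, irreflexive edge relation.\<close>

record 'v graph =
  verts :: "'v set"
  edges :: "('v \<times> 'v) set"

definition finite_loopless_graph :: "'v graph \<Rightarrow> bool" where
  "finite_loopless_graph G \<longleftrightarrow>
     finite (verts G) \<and> edges G \<subseteq> verts G \<times> verts G \<and>
     sym (edges G) \<and> irrefl (edges G)"

definition map_graph :: "('v \<Rightarrow> 'w) \<Rightarrow> 'v graph \<Rightarrow> 'w graph" where
  "map_graph f H = \<lparr>verts = f ` verts H, edges = map_prod f f ` edges H\<rparr>"

text \<open>2-lift of H given a symmetric sign s on edges: s = False means the edge
  is lifted "straight" ((u,i),(w,i)), s = True means "crossed" ((u,i),(w,\<not>i)).\<close>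

definition two_lift :: "'v graph \<Rightarrow> ('v \<times> 'v \<Rightarrow> bool) \<Rightarrow> ('v \<times> bool) graph" where
  "two_lift H s =
     \<lparr>verts = verts H \<times> UNIV,
      edges = {((u,i),(w,j)). (u,w) \<in> edges H \<and> j = (i \<noteq> s (u,w))}\<rparr>"

text \<open>Vertices of the n-th graph of the tower are encoded as (v, bs) with
  bs a bool list of length n; the 2-lift of a graph on such vertices is
  re-encoded by pushing the new bit onto the list.\<close>

definition is_two_lift_of :: "('a \<times> bool list) graph \<Rightarrow> ('a \<times> bool list) graph \<Rightarrow> bool" where
  "is_two_lift_of H' H \<longleftrightarrow>
     (\<exists>s. (\<forall>u w. s (u,w) = s (w,u)) \<and>
          H' = map_graph (\<lambda>((x,bs),b). (x, b # bs)) (two_lift H s))"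

definition base_embed :: "'a graph \<Rightarrow> ('a \<times> bool list) graph" where
  "base_embed G = map_graph (\<lambda>x. (x, [])) G"

text \<open>Non-backtracking walks from v, encoded by the list of vertices visited
  after v.\<close>

definition nb_walk :: "'a graph \<Rightarrow> 'a \<Rightarrow> 'a list \<Rightarrow> bool" where
  "nb_walk G v w \<longleftrightarrow>
     (let p = v # w in
       (\<forall>i < length w. (p ! i, p ! Suc i) \<in> edges G) \<and>
       (\<forall>i. i + 2 \<le> length w \<longrightarrow> p ! (i + 2) \<noteq> p ! i))"

definition nb_tree :: "'a graph \<Rightarrow> 'a \<Rightarrow> 'a list graph" where
  "nb_tree G v =
     \<lparr>verts = {w. nb_walk G v w},
      edges = {(w, w'). nb_walk G v w \<and> nb_walk G v w' \<and>
                        ((\<exists>x. w' = w @ [x]) \<or> (\<exists>x. w = w' @ [x]))}\<rparr>"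

definition gball :: "'v graph \<Rightarrow> 'v \<Rightarrow> nat \<Rightarrow> 'v set" where
  "gball H r0 h = {x \<in> verts H. \<exists>k \<le> h. (r0, x) \<in> (edges H) ^^ k}"

definition ball_iso :: "'v graph \<Rightarrow> 'v \<Rightarrow> 'w graph \<Rightarrow> 'w \<Rightarrow> nat \<Rightarrow> bool" where
  "ball_iso H r0 H' r1 h \<longleftrightarrow>
     (\<exists>f. bij_betw f (gball H r0 h) (gball H' r1 h) \<and> f r0 = r1 \<and>
          (\<forall>x \<in> gball H r0 h. \<forall>y \<in> gball H r0 h.
              (x, y) \<in> edges H \<longleftrightarrow> (f x, f y) \<in> edges H'))"

definition gstar_dist :: "'v graph \<Rightarrow> 'v \<Rightarrow> 'w graph \<Rightarrow> 'w \<Rightarrow> real" where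
  "gstar_dist H r0 H' r1 =
     (let r = Sup {enat h | h. ball_iso H r0 H' r1 h} in
      if r = \<infinity> then 0 else 1 / (1 + real (the_enat r)))"

end

theory Submission
  imports Defs
begin


fun nbw :: "'v graph \<Rightarrow> 'v list \<Rightarrow> bool" where
  "nbw H [] = True"
| "nbw H [x] = True"
| "nbw H (x # y # r) = ((x, y) \<in> edges H \<and> (r \<noteq> [] \<longrightarrow> hd r \<noteq> x) \<and> nbw H (y # r))"

lemma nbw_idx:
  "nbw H q \<longleftrightarrow> (\<forall>i. Suc i < length q \<longrightarrow> (q!i, q!Suc i) \<in> edges H) \<and>
                 (\<forall>i. i + 2 < length q \<longrightarrow> q!(i+2) \<noteq> q!i)"
proof (induction H q rule: nbw.induct)
  case (3 H x y r)
  show ?case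
  proof
    assume a: "nbw H (x # y # r)"
    then have e: "(x,y) \<in> edges H" and h: "r \<noteq> [] \<longrightarrow> hd r \<noteq> x" and n: "nbw H (y#r)" by auto
    from n 3 have A: "\<forall>i. Suc i < length (y#r) \<longrightarrow> ((y#r)!i, (y#r)!Suc i) \<in> edges H"
      and B: "\<forall>i. i + 2 < length (y#r) \<longrightarrow> (y#r)!(i+2) \<noteq> (y#r)!i" by auto
    show "(\<forall>i. Suc i < length (x#y#r) \<longrightarrow> ((x#y#r)!i, (x#y#r)!Suc i) \<in> edges H) \<and>
          (\<forall>i. i + 2 < length (x#y#r) \<longrightarrow> (x#y#r)!(i+2) \<noteq> (x#y#r)!i)"
    proof (intro conjI allI impI)
      fix i assume "Suc i < length (x#y#r)"
      then show "((x#y#r)!i, (x#y#r)!Suc i) \<in> edges H" using A e by (cases i) auto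
    next
      fix i assume "i + 2 < length (x#y#r)"
      then show "(x#y#r)!(i+2) \<noteq> (x#y#r)!i" using B h
        by (cases i) (auto simp: hd_conv_nth)
    qed
  next
    assume a: "(\<forall>i. Suc i < length (x#y#r) \<longrightarrow> ((x#y#r)!i, (x#y#r)!Suc i) \<in> edges H) \<and>
          (\<forall>i. i + 2 < length (x#y#r) \<longrightarrow> (x#y#r)!(i+2) \<noteq> (x#y#r)!i)"
    have e: "(x,y) \<in> edges H" using a by (metis Suc_less_eq length_Cons nth_Cons_0 nth_Cons_Suc zero_less_Suc)
    have h: "r \<noteq> [] \<longrightarrow> hd r \<noteq> x"
    proof
      assume "r \<noteq> []"
      then have "0 + 2 < length (x#y#r)" by simp
      then show "hd r \<noteq> x" using a \<open>r \<noteq> []\<close> by (auto simp: hd_conv_nth)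
    qed
    have "(\<forall>i. Suc i < length (y#r) \<longrightarrow> ((y#r)!i, (y#r)!Suc i) \<in> edges H) \<and>
          (\<forall>i. i + 2 < length (y#r) \<longrightarrow> (y#r)!(i+2) \<noteq> (y#r)!i)"
    proof (intro conjI allI impI)
      fix i assume "Suc i < length (y#r)"
      then have "Suc (Suc i) < length (x#y#r)" by simp
      then show "((y#r)!i, (y#r)!Suc i) \<in> edges H" using a by fastforce
    next
      fix i assume "i + 2 < length (y#r)"
      then have "Suc i + 2 < length (x#y#r)" by simp
      then show "(y#r)!(i+2) \<noteq> (y#r)!i" using a by fastforce
    qed
    with 3 e h show "nbw H (x#y#r)" by simp
  qed
qed auto

lemma nb_walk_nbw: "nb_walk G v w \<longleftrightarrow> nbw G (v # w)"
  unfolding nb_walk_def nbw_idx Let_def by auto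

lemma nbw_Cons: "nbw H (x # q) \<longleftrightarrow> (q = [] \<or> ((x, hd q) \<in> edges H \<and> (tl q \<noteq> [] \<longrightarrow> hd (tl q) \<noteq> x))) \<and> nbw H q"
  by (cases q) auto

lemma nbw_snoc: "nbw H (xs @ [y]) \<longleftrightarrow> nbw H xs \<and> (xs \<noteq> [] \<longrightarrow> (last xs, y) \<in> edges H)
   \<and> (length xs \<ge> 2 \<longrightarrow> last (butlast xs) \<noteq> y)"
proof (induction xs)
  case Nil then show ?case by simp
next
  case (Cons a xs)
  then show ?case
  proof (cases xs)
    case Nil then show ?thesis by simp
  next
    case (Cons b xs')
    show ?thesis
    proof (cases xs')
      case Nil then show ?thesis using Cons \<open>xs = b # xs'\<close> by auto
    next
      case (Cons c xs'')
      then show ?thesis using Cons.IH \<open>xs = b # xs'\<close> by (auto simp: nbw_Cons)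
    qed
  qed
qed

lemma nbw_append: "nbw H (xs @ [y]) \<Longrightarrow> nbw H (y # ys) \<Longrightarrow> (xs \<noteq> [] \<longrightarrow> ys \<noteq> [] \<longrightarrow> last xs \<noteq> hd ys)
  \<Longrightarrow> nbw H (xs @ y # ys)"
proof (induction xs)
  case Nil then show ?case by simp
next
  case (Cons a xs)
  show ?case
  proof (cases xs)
    case Nil
    then show ?thesis using Cons.prems by (cases ys) auto
  next
    case (Cons b xs')
    have p1: "nbw H (a # b # xs' @ [y])" using Cons.prems(1) Cons by simp
    have ab: "(a,b) \<in> edges H" and ha: "hd (xs' @ [y]) \<noteq> a" and nb: "nbw H (b # xs' @ [y])"
      using p1 by auto
    have "nbw H (xs @ y # ys)"
      using Cons.IH Cons.prems Cons by (simp add: nbw_Cons)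
    moreover have "hd (xs' @ y # ys) = hd (xs' @ [y])" by (cases xs') auto
    ultimately show ?thesis using ab ha Cons by simp
  qed
qed

lemma nbw_rev: "sym (edges H) \<Longrightarrow> nbw H (rev q) = nbw H q"
proof (induction q)
  case Nil then show ?case by simp
next
  case (Cons x q)
  have bl: "butlast (rev q) = rev (tl q)" by (simp add: butlast_rev)
  have "nbw H (rev (x # q)) = nbw H (rev q @ [x])" by simp
  also have "\<dots> \<longleftrightarrow> nbw H q \<and> (q \<noteq> [] \<longrightarrow> (hd q, x) \<in> edges H) \<and> (length q \<ge> 2 \<longrightarrow> hd (tl q) \<noteq> x)"
    using Cons by (auto simp: nbw_snoc bl last_rev)
  also have "\<dots> \<longleftrightarrow> nbw H (x # q)"
    using Cons.prems by (cases q; cases "tl q") (auto simp: sym_def)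
  finally show ?case .
qed



definition wfg :: "'v graph \<Rightarrow> bool" where
  "wfg H \<longleftrightarrow> finite (verts H) \<and> edges H \<subseteq> verts H \<times> verts H \<and> sym (edges H)"

definition cover :: "'v graph \<Rightarrow> 'w graph \<Rightarrow> ('v \<Rightarrow> 'w) \<Rightarrow> bool" where
  "cover H' H p \<longleftrightarrow> wfg H' \<and> (\<forall>x\<in>verts H'. p x \<in> verts H) \<and>
     (\<forall>x y. (x,y) \<in> edges H' \<longrightarrow> (p x, p y) \<in> edges H) \<and>
     (\<forall>x\<in>verts H'. \<forall>u. (p x, u) \<in> edges H \<longrightarrow> (\<exists>!y. (x,y) \<in> edges H' \<and> p y = u))"

lemma cover_comp:
  assumes "cover H2 H1 q" "cover H1 H0 p"
  shows "cover H2 H0 (p \<circ> q)"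
  unfolding cover_def
proof (intro conjI ballI allI impI)
  show "wfg H2" using assms(1) by (simp add: cover_def)
  fix x assume x: "x \<in> verts H2"
  then show "(p \<circ> q) x \<in> verts H0" using assms by (simp add: cover_def)
next
  fix x y assume "(x,y) \<in> edges H2"
  then show "((p \<circ> q) x, (p \<circ> q) y) \<in> edges H0" using assms by (simp add: cover_def)
next
  fix x u assume x: "x \<in> verts H2" and e: "((p \<circ> q) x, u) \<in> edges H0"
  have qx: "q x \<in> verts H1" using x assms(1) by (simp add: cover_def)
  then obtain y1 where y1: "(q x, y1) \<in> edges H1" "p y1 = u"
    and u1: "\<And>z. (q x, z) \<in> edges H1 \<Longrightarrow> p z = u \<Longrightarrow> z = y1"
    using e assms(2) unfolding cover_def by (metis comp_apply)
  obtain y2 where y2: "(x, y2) \<in> edges H2" "q y2 = y1"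
    and u2: "\<And>z. (x, z) \<in> edges H2 \<Longrightarrow> q z = y1 \<Longrightarrow> z = y2"
    using x y1(1) assms(1) unfolding cover_def by metis
  show "\<exists>!y. (x, y) \<in> edges H2 \<and> (p \<circ> q) y = u"
  proof (rule ex1I[of _ y2])
    show "(x, y2) \<in> edges H2 \<and> (p \<circ> q) y2 = u" using y2 y1 by simp
  next
    fix z assume z: "(x, z) \<in> edges H2 \<and> (p \<circ> q) z = u"
    then have "(q x, q z) \<in> edges H1" using assms(1) by (simp add: cover_def)
    then have "q z = y1" using u1 z by simp
    then show "z = y2" using u2 z by simp
  qed
qed

lemma cover_cong:
  assumes "cover H' H p" "\<And>x. x \<in> verts H' \<Longrightarrow> q x = p x"
  shows "cover H' H q"
proof -
  have E: "\<And>x y. (x,y) \<in> edges H' \<Longrightarrow> x \<in> verts H' \<and> y \<in> verts H'"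
    using assms(1) by (auto simp: cover_def wfg_def)
  show ?thesis using assms(1) unfolding cover_def
  proof (intro conjI ballI allI impI)
    assume A: "wfg H' \<and> (\<forall>x\<in>verts H'. p x \<in> verts H) \<and>
      (\<forall>x y. (x, y) \<in> edges H' \<longrightarrow> (p x, p y) \<in> edges H) \<and>
      (\<forall>x\<in>verts H'. \<forall>u. (p x, u) \<in> edges H \<longrightarrow> (\<exists>!y. (x, y) \<in> edges H' \<and> p y = u))"
    show "wfg H'" using A by simp
    fix x assume "x \<in> verts H'" then show "q x \<in> verts H" using A assms(2) by simp
  next
    fix x y assume "(x,y) \<in> edges H'"
    moreover assume A: "wfg H' \<and> (\<forall>x\<in>verts H'. p x \<in> verts H) \<and>
      (\<forall>x y. (x, y) \<in> edges H' \<longrightarrow> (p x, p y) \<in> edges H) \<and>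
      (\<forall>x\<in>verts H'. \<forall>u. (p x, u) \<in> edges H \<longrightarrow> (\<exists>!y. (x, y) \<in> edges H' \<and> p y = u))"
    ultimately show "(q x, q y) \<in> edges H" using E assms(2) by metis
  next
    fix x u assume x: "x \<in> verts H'" and e: "(q x, u) \<in> edges H"
    assume A: "wfg H' \<and> (\<forall>x\<in>verts H'. p x \<in> verts H) \<and>
      (\<forall>x y. (x, y) \<in> edges H' \<longrightarrow> (p x, p y) \<in> edges H) \<and>
      (\<forall>x\<in>verts H'. \<forall>u. (p x, u) \<in> edges H \<longrightarrow> (\<exists>!y. (x, y) \<in> edges H' \<and> p y = u))"
    then have "\<exists>!y. (x, y) \<in> edges H' \<and> p y = u" using x e assms(2) by metis
    then show "\<exists>!y. (x, y) \<in> edges H' \<and> q y = u" using E assms(2) by metis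
  qed
qed

lemma cover_id: "wfg H \<Longrightarrow> cover H H id"
  by (auto simp: cover_def wfg_def)

definition lift1 :: "('a \<times> bool list) graph \<Rightarrow> (('a \<times> bool list) \<times> ('a \<times> bool list) \<Rightarrow> bool) \<Rightarrow> ('a \<times> bool list) graph" where
  "lift1 H s = map_graph (\<lambda>((x,bs),b). (x, b # bs)) (two_lift H s)"

lemma lift1_V: "verts (lift1 H s) = (\<lambda>((x,bs),b). (x, b # bs)) ` (verts H \<times> UNIV)"
  by (simp add: lift1_def map_graph_def two_lift_def)

lemma lift1_E: "edges (lift1 H s) = map_prod (\<lambda>((x,bs),b). (x, b # bs)) (\<lambda>((x,bs),b). (x, b # bs)) `
   {((u,i),(w,j)). (u,w) \<in> edges H \<and> j = (i \<noteq> s (u,w))}"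
  by (simp add: lift1_def map_graph_def two_lift_def)

lemma lift1_verts: "(x, l) \<in> verts (lift1 H s) \<longleftrightarrow> (\<exists>b bs. l = b # bs \<and> (x, bs) \<in> verts H)"
proof
  assume "(x, l) \<in> verts (lift1 H s)"
  then have "(x, l) \<in> (\<lambda>((x,bs),b). (x, b # bs)) ` (verts H \<times> UNIV)" by (simp only: lift1_V)
  then obtain a where a: "a \<in> verts H \<times> UNIV" "(x, l) = (\<lambda>((x,bs),b). (x, b # bs)) a" by (rule imageE)
  obtain y bs b where "a = ((y,bs),b)" by (metis prod.exhaust)
  then show "\<exists>b bs. l = b # bs \<and> (x, bs) \<in> verts H" using a by simp
next
  assume "\<exists>b bs. l = b # bs \<and> (x, bs) \<in> verts H"
  then obtain b bs where "l = b # bs" "(x, bs) \<in> verts H" by blast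
  then have "(x, l) = (\<lambda>((x,bs),b). (x, b # bs)) ((x,bs),b)" "((x,bs),b) \<in> verts H \<times> UNIV" by auto
  then show "(x, l) \<in> verts (lift1 H s)" unfolding lift1_V by (rule image_eqI)
qed

lemma lift1_edges: "((x, l), (y, l')) \<in> edges (lift1 H s) \<longleftrightarrow>
   (\<exists>b bs c cs. l = b # bs \<and> l' = c # cs \<and> ((x,bs),(y,cs)) \<in> edges H \<and> c = (b \<noteq> s ((x,bs),(y,cs))))"
proof
  assume "((x, l), (y, l')) \<in> edges (lift1 H s)"
  then have "((x, l), (y, l')) \<in> map_prod (\<lambda>((x,bs),b). (x, b # bs)) (\<lambda>((x,bs),b). (x, b # bs)) `
   {((u,i),(w,j)). (u,w) \<in> edges H \<and> j = (i \<noteq> s (u,w))}" by (simp only: lift1_E)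
  then obtain a where a: "a \<in> {((u,i),(w,j)). (u,w) \<in> edges H \<and> j = (i \<noteq> s (u,w))}"
     "((x, l), (y, l')) = map_prod (\<lambda>((x,bs),b). (x, b # bs)) (\<lambda>((x,bs),b). (x, b # bs)) a"
    by (rule imageE)
  obtain x1 bs1 b y1 cs1 c where "a = (((x1,bs1),b),((y1,cs1),c))" by (metis prod.exhaust)
  then show "\<exists>b bs c cs. l = b # bs \<and> l' = c # cs \<and> ((x,bs),(y,cs)) \<in> edges H \<and> c = (b \<noteq> s ((x,bs),(y,cs)))"
    using a by simp
next
  assume "\<exists>b bs c cs. l = b # bs \<and> l' = c # cs \<and> ((x,bs),(y,cs)) \<in> edges H \<and> c = (b \<noteq> s ((x,bs),(y,cs)))"
  then obtain b bs c cs where B: "l = b # bs" "l' = c # cs" "((x,bs),(y,cs)) \<in> edges H" "c = (b \<noteq> s ((x,bs),(y,cs)))"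
    by blast
  have "(((x,bs),b),((y,cs),c)) \<in> {((u,i),(w,j)). (u,w) \<in> edges H \<and> j = (i \<noteq> s (u,w))}"
    using B by simp
  moreover have "((x, l), (y, l')) = map_prod (\<lambda>((x,bs),b). (x, b # bs)) (\<lambda>((x,bs),b). (x, b # bs)) (((x,bs),b),((y,cs),c))"
    using B by simp
  ultimately show "((x, l), (y, l')) \<in> edges (lift1 H s)" unfolding lift1_E by (rule image_eqI[rotated])
qed

definition pr1 :: "'a \<times> bool list \<Rightarrow> 'a \<times> bool list" where
  "pr1 x = (fst x, tl (snd x))"

lemma cover_lift1:
  assumes "wfg H" "\<And>a b. s (a,b) = s (b,a)"
  shows "cover (lift1 H s) H pr1"
  unfolding cover_def
proof (intro conjI ballI allI impI)
  have fin: "finite (verts H \<times> (UNIV :: bool set))" using assms(1) by (simp add: wfg_def)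
  have "verts (lift1 H s) = (\<lambda>((x,bs),b). (x, b # bs)) ` (verts H \<times> UNIV)"
    unfolding lift1_def map_graph_def two_lift_def by simp
  then have f: "finite (verts (lift1 H s))" using fin by simp
  have sub: "edges (lift1 H s) \<subseteq> verts (lift1 H s) \<times> verts (lift1 H s)"
  proof
    fix e assume "e \<in> edges (lift1 H s)"
    then obtain x l y l' where e: "e = ((x,l),(y,l'))" "((x,l),(y,l')) \<in> edges (lift1 H s)"
      by (metis surj_pair)
    then show "e \<in> verts (lift1 H s) \<times> verts (lift1 H s)"
      using assms(1) by (auto simp: lift1_edges lift1_verts wfg_def)
  qed
  have sy: "sym (edges (lift1 H s))"
  proof (rule symI)
    fix a b assume "(a, b) \<in> edges (lift1 H s)"
    then obtain x l y l' where e: "a = (x,l)" "b = (y,l')" "((x,l),(y,l')) \<in> edges (lift1 H s)"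
      by (metis surj_pair)
    then show "(b, a) \<in> edges (lift1 H s)"
      using assms by (auto simp: lift1_edges wfg_def sym_def)
  qed
  show "wfg (lift1 H s)" using f sub sy by (simp add: wfg_def)
next
  fix x assume "x \<in> verts (lift1 H s)"
  then show "pr1 x \<in> verts H" by (cases x) (auto simp: lift1_verts pr1_def)
next
  fix a b assume "(a, b) \<in> edges (lift1 H s)"
  then show "(pr1 a, pr1 b) \<in> edges H" by (cases a; cases b) (auto simp: lift1_edges pr1_def)
next
  fix a u assume a: "a \<in> verts (lift1 H s)" and e: "(pr1 a, u) \<in> edges H"
  obtain x l where al: "a = (x, l)" by (cases a)
  then obtain b bs where l: "l = b # bs" "(x, bs) \<in> verts H" using a by (auto simp: lift1_verts)
  obtain y cs where u: "u = (y, cs)" by (cases u)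
  have e': "((x,bs),(y,cs)) \<in> edges H" using e al l u by (simp add: pr1_def)
  define c where "c = (b \<noteq> s ((x,bs),(y,cs)))"
  show "\<exists>!z. (a, z) \<in> edges (lift1 H s) \<and> pr1 z = u"
  proof (rule ex1I[of _ "(y, c # cs)"])
    show "(a, (y, c # cs)) \<in> edges (lift1 H s) \<and> pr1 (y, c # cs) = u"
      using e' al l u c_def by (simp add: lift1_edges pr1_def)
  next
    fix z assume z: "(a, z) \<in> edges (lift1 H s) \<and> pr1 z = u"
    obtain y' l' where zz: "z = (y', l')" by (cases z)
    show "z = (y, c # cs)" using z zz al l u c_def by (auto simp: lift1_edges pr1_def)
  qed
qed

lemma nbw_map: "cover H' H p \<Longrightarrow> nbw H' q \<Longrightarrow> nbw H (map p q)"
proof (induction H' q rule: nbw.induct)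
  case (3 H' x y r)
  have e: "(x,y) \<in> edges H'" and n: "nbw H' (y # r)" and h: "r \<noteq> [] \<longrightarrow> hd r \<noteq> x" using 3 by auto
  have "nbw H (map p (y # r))" using 3 n by simp
  moreover have "(p x, p y) \<in> edges H" using e 3(2) by (simp add: cover_def)
  moreover have "r \<noteq> [] \<longrightarrow> p (hd r) \<noteq> p x"
  proof
    assume r: "r \<noteq> []"
    have yv: "y \<in> verts H'" and ye: "(y, x) \<in> edges H'" and yr: "(y, hd r) \<in> edges H'"
      using e n r 3(2) by (auto simp: cover_def wfg_def sym_def neq_Nil_conv)
    have "(p y, p x) \<in> edges H" using ye 3(2) by (simp add: cover_def)
    then have "\<exists>!z. (y, z) \<in> edges H' \<and> p z = p x" using yv 3(2) by (simp add: cover_def)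
    then show "p (hd r) \<noteq> p x" using ye yr h r by blast
  qed
  ultimately show ?case by (cases r) auto
qed auto

definition girth_gt :: "'v graph \<Rightarrow> nat \<Rightarrow> bool" where
  "girth_gt H L \<longleftrightarrow> (\<forall>q. nbw H q \<and> 2 \<le> length q \<and> length q \<le> Suc L \<longrightarrow> hd q \<noteq> last q)"

lemma girth_mono: "cover H' H p \<Longrightarrow> girth_gt H L \<Longrightarrow> girth_gt H' L"
  unfolding girth_gt_def
proof (intro allI impI)
  fix q assume c: "cover H' H p" and g: "\<forall>q. nbw H q \<and> 2 \<le> length q \<and> length q \<le> Suc L \<longrightarrow> hd q \<noteq> last q"
    and q: "nbw H' q \<and> 2 \<le> length q \<and> length q \<le> Suc L"
  then have "hd (map p q) \<noteq> last (map p q)" using nbw_map[OF c] by auto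
  then show "hd q \<noteq> last q" using q by (cases q) (auto simp: last_map)
qed

lemma girth_zero: "girth_gt H 0"
proof -
  { fix q :: "'a list" assume "2 \<le> length q \<and> length q \<le> Suc 0" hence False by linarith }
  thus ?thesis unfolding girth_gt_def by blast
qed



definition nbr :: "'b graph \<Rightarrow> ('b \<Rightarrow> 'a) \<Rightarrow> 'b \<Rightarrow> 'a \<Rightarrow> 'b" where
  "nbr H p x u = (THE y. (x,y) \<in> edges H \<and> p y = u)"

lemma nbr:
  assumes "cover H G p" "x \<in> verts H" "(p x, u) \<in> edges G"
  shows "(x, nbr H p x u) \<in> edges H \<and> p (nbr H p x u) = u"
proof -
  have "\<exists>!y. (x,y) \<in> edges H \<and> p y = u" using assms unfolding cover_def by blast
  then show ?thesis unfolding nbr_def by (rule theI')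
qed

lemma nbr_unique:
  assumes "cover H G p" "(x,y) \<in> edges H"
  shows "y = nbr H p x (p y)"
proof -
  have x: "x \<in> verts H" using assms unfolding cover_def wfg_def by blast
  have "(p x, p y) \<in> edges G" using assms unfolding cover_def by blast
  then have "\<exists>!z. (x,z) \<in> edges H \<and> p z = p y" using assms x unfolding cover_def by blast
  then show ?thesis unfolding nbr_def using assms(2) by (metis (mono_tags, lifting) the_equality)
qed

fun lw :: "'b graph \<Rightarrow> ('b \<Rightarrow> 'a) \<Rightarrow> 'b \<Rightarrow> 'a list \<Rightarrow> 'b" where
  "lw H p x [] = x"
| "lw H p x (u # w) = lw H p (nbr H p x u) w"

fun lwl :: "'b graph \<Rightarrow> ('b \<Rightarrow> 'a) \<Rightarrow> 'b \<Rightarrow> 'a list \<Rightarrow> 'b list" where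
  "lwl H p x [] = [x]"
| "lwl H p x (u # w) = x # lwl H p (nbr H p x u) w"

lemma lwl_Cons: "lwl H p x w = x # tl (lwl H p x w)"
  by (cases w) auto

lemma lwl_length: "length (lwl H p x w) = Suc (length w)"
  by (induction w arbitrary: x) auto

lemma lw_snoc: "lw H p x (w @ [u]) = nbr H p (lw H p x w) u"
  by (induction w arbitrary: x) auto

lemma lift_walk:
  assumes c: "cover H G p"
  shows "nbw G (v # w) \<Longrightarrow> x \<in> verts H \<Longrightarrow> p x = v \<Longrightarrow>
     nbw H (lwl H p x w) \<and> map p (lwl H p x w) = v # w \<and> last (lwl H p x w) = lw H p x w \<and>
     lw H p x w \<in> verts H \<and> p (lw H p x w) = last (v # w)"
proof (induction w arbitrary: v x)
  case Nil then show ?case by simp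
next
  case (Cons u w')
  have e: "(v,u) \<in> edges G" and n: "nbw G (u # w')" and h: "w' \<noteq> [] \<longrightarrow> hd w' \<noteq> v"
    using Cons.prems(1) by auto
  define y where "y = nbr H p x u"
  have y: "(x, y) \<in> edges H" "p y = u" using nbr[OF c Cons.prems(2)] e Cons.prems(3) y_def by auto
  have yv: "y \<in> verts H" using y c unfolding cover_def wfg_def by blast
  have IH: "nbw H (lwl H p y w') \<and> map p (lwl H p y w') = u # w' \<and> last (lwl H p y w') = lw H p y w' \<and>
     lw H p y w' \<in> verts H \<and> p (lw H p y w') = last (u # w')"
    using Cons.IH[OF n yv y(2)] .
  have L: "lwl H p x (u # w') = x # lwl H p y w'" using y_def by simp
  have hd: "hd (lwl H p y w') = y" by (subst lwl_Cons) simp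
  have "tl (lwl H p y w') \<noteq> [] \<longrightarrow> hd (tl (lwl H p y w')) \<noteq> x"
  proof
    assume t: "tl (lwl H p y w') \<noteq> []"
    have m: "map p (tl (lwl H p y w')) = w'" using IH by (metis list.sel(3) map_tl)
    then have "w' \<noteq> []" using t by auto
    then have "p (hd (tl (lwl H p y w'))) = hd w'" using m t by (metis hd_map)
    then show "hd (tl (lwl H p y w')) \<noteq> x" using h \<open>w' \<noteq> []\<close> Cons.prems(3) by auto
  qed
  then have "nbw H (x # lwl H p y w')" using IH y(1) hd by (simp add: nbw_Cons)
  moreover have ne: "lwl H p y w' \<noteq> []" by (subst lwl_Cons) simp
  ultimately show ?case using L IH Cons.prems(3) y_def by simp
qed

lemma closed_contra:
  assumes g: "girth_gt H L" and s: "sym (edges H)"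
    and n1: "nbw H (r # T1)" and n2: "nbw H (r # T2)"
    and hd: "T1 \<noteq> [] \<longrightarrow> T2 \<noteq> [] \<longrightarrow> hd T1 \<noteq> hd T2"
    and ne: "T1 \<noteq> [] \<or> T2 \<noteq> []" and len: "length T1 + length T2 \<le> L"
  shows "last (r # T1) \<noteq> last (r # T2)"
proof -
  have a: "nbw H (rev T1 @ [r])" using nbw_rev[OF s, of "r # T1"] n1 by simp
  have j: "rev T1 \<noteq> [] \<longrightarrow> T2 \<noteq> [] \<longrightarrow> last (rev T1) \<noteq> hd T2" using hd by (simp add: last_rev)
  have C: "nbw H (rev T1 @ r # T2)" using nbw_append[OF a n2 j] .
  have l: "2 \<le> length (rev T1 @ r # T2)" "length (rev T1 @ r # T2) \<le> Suc L" using len ne by (auto simp: Suc_le_eq)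
  have "hd (rev T1 @ r # T2) \<noteq> last (rev T1 @ r # T2)"
    using g C l unfolding girth_gt_def by blast
  moreover have "hd (rev T1 @ r # T2) = last (r # T1)" by (cases "T1 = []") (auto simp: hd_rev)
  moreover have "last (rev T1 @ r # T2) = last (r # T2)" by simp
  ultimately show ?thesis by simp
qed

lemma diverge:
  assumes c: "cover H G p" and g: "girth_gt H L"
    and n1: "nbw G (v # w1)" and n2: "nbw G (v # w2)" and x: "x \<in> verts H" "p x = v"
    and len: "length w1 + length w2 \<le> L" and ne: "w1 \<noteq> [] \<or> w2 \<noteq> []"
    and hd: "w1 \<noteq> [] \<longrightarrow> w2 \<noteq> [] \<longrightarrow> hd w1 \<noteq> hd w2"
  shows "lw H p x w1 \<noteq> lw H p x w2"
proof -
  have s: "sym (edges H)" using c by (simp add: cover_def wfg_def)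
  define T1 where "T1 = tl (lwl H p x w1)"
  define T2 where "T2 = tl (lwl H p x w2)"
  have Q1: "lwl H p x w1 = x # T1" unfolding T1_def by (rule lwl_Cons)
  have Q2: "lwl H p x w2 = x # T2" unfolding T2_def by (rule lwl_Cons)
  have A1: "nbw H (x # T1) \<and> map p (x # T1) = v # w1 \<and> last (x # T1) = lw H p x w1"
    using lift_walk[OF c n1 x] Q1 by simp
  have A2: "nbw H (x # T2) \<and> map p (x # T2) = v # w2 \<and> last (x # T2) = lw H p x w2"
    using lift_walk[OF c n2 x] Q2 by simp
  have m1: "map p T1 = w1" and m2: "map p T2 = w2" using A1 A2 by auto
  have "T1 \<noteq> [] \<longrightarrow> T2 \<noteq> [] \<longrightarrow> hd T1 \<noteq> hd T2"
    using hd m1 m2 by (metis Nil_is_map_conv hd_map)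
  moreover have "T1 \<noteq> [] \<or> T2 \<noteq> []" using ne m1 m2 by auto
  moreover have "length T1 + length T2 \<le> L" using len m1 m2 by auto
  ultimately have "last (x # T1) \<noteq> last (x # T2)"
    using closed_contra[OF g s] A1 A2 by blast
  then show ?thesis using A1 A2 by simp
qed

lemma lift_inj:
  assumes c: "cover H G p" and g: "girth_gt H L"
  shows "nbw G (v # w1) \<Longrightarrow> nbw G (v # w2) \<Longrightarrow> x \<in> verts H \<Longrightarrow> p x = v \<Longrightarrow>
    length w1 + length w2 \<le> L \<Longrightarrow> lw H p x w1 = lw H p x w2 \<Longrightarrow> w1 = w2"
proof (induction w1 arbitrary: v x w2)
  case Nil
  show ?case
  proof (rule ccontr)
    assume "[] \<noteq> w2"
    then show False using diverge[OF c g Nil.prems(1,2,3,4,5)] Nil.prems(6) by simp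
  qed
next
  case (Cons u w1')
  show ?case
  proof (cases "w2 \<noteq> [] \<and> hd w2 = u")
    case True
    then obtain w2' where w2: "w2 = u # w2'" by (cases w2) auto
    have e: "(v,u) \<in> edges G" using Cons.prems(1) by simp
    define y where "y = nbr H p x u"
    have y: "(x, y) \<in> edges H" "p y = u" using nbr[OF c Cons.prems(3)] e Cons.prems(4) y_def by auto
    have yv: "y \<in> verts H" using y c unfolding cover_def wfg_def by blast
    have IH: "nbw G (u # w1') \<Longrightarrow> nbw G (u # w2') \<Longrightarrow> y \<in> verts H \<Longrightarrow> p y = u \<Longrightarrow>
      length w1' + length w2' \<le> L \<Longrightarrow> lw H p y w1' = lw H p y w2' \<Longrightarrow> w1' = w2'"
      by (rule Cons.IH)
    have "w1' = w2'"
      apply (rule IH)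
      using Cons.prems w2 yv y y_def by auto
    then show ?thesis using w2 by simp
  next
    case False
    then show ?thesis using diverge[OF c g Cons.prems(1,2,3,4,5)] Cons.prems(6) by auto
  qed
qed



lemma tree_verts: "a \<in> verts (nb_tree G v) \<longleftrightarrow> nbw G (v # a)"
  by (simp add: nb_tree_def nb_walk_nbw)

lemma tree_edges: "(a,b) \<in> edges (nb_tree G v) \<longleftrightarrow> nbw G (v # a) \<and> nbw G (v # b) \<and> ((\<exists>x. b = a @ [x]) \<or> (\<exists>x. a = b @ [x]))"
  by (simp add: nb_tree_def nb_walk_nbw)

lemma tree_reach_len: "([], w) \<in> (edges (nb_tree G v)) ^^ k \<Longrightarrow> length w \<le> k"
proof (induction k arbitrary: w)
  case 0 then show ?case by simp
next
  case (Suc k)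
  then obtain b where b: "([], b) \<in> (edges (nb_tree G v)) ^^ k" "(b, w) \<in> edges (nb_tree G v)"
    by (meson relpow_Suc_E)
  have "length b \<le> k" using Suc.IH b(1) .
  moreover have "length w \<le> Suc (length b)"
  proof -
    have "(\<exists>x. w = b @ [x]) \<or> (\<exists>x. b = w @ [x])" using b(2) by (simp add: tree_edges)
    then show ?thesis by auto
  qed
  ultimately show ?case by simp
qed

lemma tree_reach: "nbw G (v # w) \<Longrightarrow> ([], w) \<in> (edges (nb_tree G v)) ^^ (length w)"
proof (induction w rule: rev_induct)
  case Nil then show ?case by simp
next
  case (snoc x xs)
  have n: "nbw G (v # xs)" using snoc.prems nbw_snoc[of G "v # xs" x] by simp
  have "(xs, xs @ [x]) \<in> edges (nb_tree G v)" using n snoc.prems by (simp add: tree_edges)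
  from relpow_Suc_I[OF snoc.IH[OF n] this] show ?case by simp
qed

lemma tree_ball: "gball (nb_tree G v) [] h = {w. nbw G (v # w) \<and> length w \<le> h}"
proof
  show "gball (nb_tree G v) [] h \<subseteq> {w. nbw G (v # w) \<and> length w \<le> h}"
  proof
    fix w assume "w \<in> gball (nb_tree G v) [] h"
    then obtain k where A: "w \<in> verts (nb_tree G v)" "k \<le> h" "([], w) \<in> (edges (nb_tree G v)) ^^ k"
      unfolding gball_def by blast
    have "length w \<le> k" using A(3) by (rule tree_reach_len)
    moreover have "nbw G (v # w)" using A(1) by (simp add: tree_verts)
    ultimately show "w \<in> {w. nbw G (v # w) \<and> length w \<le> h}" using A(2) by simp
  qed
  show "{w. nbw G (v # w) \<and> length w \<le> h} \<subseteq> gball (nb_tree G v) [] h"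
  proof
    fix w assume "w \<in> {w. nbw G (v # w) \<and> length w \<le> h}"
    then have A: "nbw G (v # w)" "length w \<le> h" by auto
    have "([], w) \<in> (edges (nb_tree G v)) ^^ (length w)" using A(1) by (rule tree_reach)
    moreover have "w \<in> verts (nb_tree G v)" using A(1) by (simp add: tree_verts)
    ultimately show "w \<in> gball (nb_tree G v) [] h"
      unfolding gball_def using A(2) by blast
  qed
qed

lemma step_lemma:
  assumes c: "cover H G p" and n: "nbw G (v # w)" and r: "r \<in> verts H" "p r = v"
    and e: "(lw H p r w, y) \<in> edges H"
  shows "\<exists>w'. nbw G (v # w') \<and> lw H p r w' = y \<and> (w' = w @ [p y] \<or> w = w' @ [last (v # w)])"
proof -
  have L: "lw H p r w \<in> verts H" "p (lw H p r w) = last (v # w)" using lift_walk[OF c n r] by auto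
  have eG: "(last (v # w), p y) \<in> edges G" using e c L(2) unfolding cover_def by metis
  have yu: "nbr H p (lw H p r w) (p y) = y" using nbr_unique[OF c e] by (rule sym)
  show ?thesis
  proof (cases "length (v # w) \<ge> 2 \<and> last (butlast (v # w)) = p y")
    case False
    then have "nbw G ((v # w) @ [p y])" using n eG nbw_snoc[of G "v # w" "p y"] by auto
    moreover have "lw H p r (w @ [p y]) = y" using yu lw_snoc[of H p r w "p y"] by simp
    ultimately show ?thesis by auto
  next
    case True
    then have "w \<noteq> []" by auto
    then obtain w0 a where w: "w = w0 @ [a]" by (cases w rule: rev_cases) auto
    have n0: "nbw G (v # w0)" using n w nbw_snoc[of G "v # w0" a] by simp
    have u: "last (v # w0) = p y" using True w by (simp add: butlast_append)
    have a: "last (v # w) = a" using w by simp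
    have L0: "lw H p r w0 \<in> verts H" "p (lw H p r w0) = last (v # w0)" using lift_walk[OF c n0 r] by auto
    have "lw H p r w = nbr H p (lw H p r w0) a" using w lw_snoc by simp
    moreover have "(last (v # w0), a) \<in> edges G" using n w nbw_snoc[of G "v # w0" a] by simp
    ultimately have "(lw H p r w0, lw H p r w) \<in> edges H" using nbr[OF c L0(1)] L0(2) by simp
    then have "(lw H p r w, lw H p r w0) \<in> edges H" using c unfolding cover_def wfg_def sym_def by blast
    then have "lw H p r w0 = nbr H p (lw H p r w) (p y)" using nbr_unique[OF c] L0(2) u by metis
    then have "lw H p r w0 = y" using yu by metis
    then show ?thesis using n0 w a by auto
  qed
qed

lemma H_reach: assumes c: "cover H G p" and r: "r \<in> verts H" "p r = v"
  shows "nbw G (v # w) \<Longrightarrow> (r, lw H p r w) \<in> (edges H) ^^ (length w)"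
proof (induction w rule: rev_induct)
  case Nil then show ?case by simp
next
  case (snoc x xs)
  have n: "nbw G (v # xs)" using snoc.prems nbw_snoc[of G "v # xs" x] by simp
  have L: "lw H p r xs \<in> verts H" "p (lw H p r xs) = last (v # xs)" using lift_walk[OF c n r] by auto
  have "(last (v # xs), x) \<in> edges G" using snoc.prems nbw_snoc[of G "v # xs" x] by simp
  then have "(lw H p r xs, lw H p r (xs @ [x])) \<in> edges H" using nbr[OF c L(1)] L(2) lw_snoc by metis
  from relpow_Suc_I[OF snoc.IH[OF n] this] show ?case by simp
qed

lemma H_reach_back: assumes c: "cover H G p" and r: "r \<in> verts H" "p r = v"
  shows "(r, y) \<in> (edges H) ^^ k \<Longrightarrow> \<exists>w. nbw G (v # w) \<and> length w \<le> k \<and> lw H p r w = y"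
proof (induction k arbitrary: y)
  case 0 then show ?case by (intro exI[of _ "[]"]) simp
next
  case (Suc k)
  then obtain z where z: "(r, z) \<in> (edges H) ^^ k" "(z, y) \<in> edges H" by (meson relpow_Suc_E)
  obtain w where w: "nbw G (v # w)" "length w \<le> k" "lw H p r w = z" using Suc.IH z(1) by blast
  obtain w' where A: "nbw G (v # w') \<and> lw H p r w' = y" and B: "(w' = w @ [p y] \<or> w = w' @ [last (v # w)])"
    using step_lemma[OF c w(1) r] z(2) w(3) by blast
  from B have "length w' \<le> Suc (length w)"
  proof
    assume "w' = w @ [p y]" then show ?thesis by simp
  next
    assume "w = w' @ [last (v # w)]"
    then have "length w = Suc (length w')" by (metis length_append_singleton)
    then show ?thesis by simp
  qed
  then show ?case using w(2) A by (intro exI[of _ w']) auto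
qed

lemma H_ball: assumes c: "cover H G p" and r: "r \<in> verts H" "p r = v"
  shows "gball H r h = lw H p r ` {w. nbw G (v # w) \<and> length w \<le> h}"
proof
  show "gball H r h \<subseteq> lw H p r ` {w. nbw G (v # w) \<and> length w \<le> h}"
  proof
    fix y assume "y \<in> gball H r h"
    then obtain k where k: "k \<le> h" "(r, y) \<in> (edges H) ^^ k" unfolding gball_def by blast
    then obtain w where w: "nbw G (v # w)" "length w \<le> k" "lw H p r w = y" using H_reach_back[OF c r] by blast
    then have "w \<in> {w. nbw G (v # w) \<and> length w \<le> h}" using k by simp
    then show "y \<in> lw H p r ` {w. nbw G (v # w) \<and> length w \<le> h}" using w(3) by blast
  qed
  show "lw H p r ` {w. nbw G (v # w) \<and> length w \<le> h} \<subseteq> gball H r h"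
  proof
    fix y assume "y \<in> lw H p r ` {w. nbw G (v # w) \<and> length w \<le> h}"
    then obtain w where w: "nbw G (v # w)" "length w \<le> h" "y = lw H p r w" by blast
    have "lw H p r w \<in> verts H" using lift_walk[OF c w(1) r] by blast
    then show "y \<in> gball H r h" unfolding gball_def using H_reach[OF c r w(1)] w(2,3) by blast
  qed
qed



lemma lift_edge:
  assumes c: "cover H G p" and r: "r \<in> verts H" "p r = v" and n: "nbw G (v # a @ [x])"
  shows "(lw H p r a, lw H p r (a @ [x])) \<in> edges H"
proof -
  have n0: "nbw G (v # a)" using n nbw_snoc[of G "v # a" x] by simp
  have e: "(last (v # a), x) \<in> edges G" using n nbw_snoc[of G "v # a" x] by simp
  have L: "lw H p r a \<in> verts H" "p (lw H p r a) = last (v # a)" using lift_walk[OF c n0 r] by auto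
  show ?thesis using nbr[OF c L(1)] L(2) e lw_snoc[of H p r a x] by simp
qed

lemma ball_iso_lemma:
  assumes c: "cover H G p" and g: "girth_gt H (2 * h + 2)" and r: "r \<in> verts H" "p r = v"
  shows "ball_iso H r (nb_tree G v) [] h"
proof -
  define B where "B = {w. nbw G (v # w) \<and> length w \<le> h}"
  define f where "f = lw H p r"
  have s: "sym (edges H)" using c by (simp add: cover_def wfg_def)
  have bg: "gball H r h = f ` B" unfolding f_def B_def by (rule H_ball[OF c r])
  have tb: "gball (nb_tree G v) [] h = B" unfolding B_def by (rule tree_ball)
  have injS: "\<And>w1 w2. nbw G (v # w1) \<Longrightarrow> nbw G (v # w2) \<Longrightarrow> length w1 \<le> Suc h \<Longrightarrow> length w2 \<le> Suc h
      \<Longrightarrow> f w1 = f w2 \<Longrightarrow> w1 = w2"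
  proof -
    fix w1 w2 assume a: "nbw G (v # w1)" "nbw G (v # w2)" "length w1 \<le> Suc h" "length w2 \<le> Suc h" "f w1 = f w2"
    have "length w1 + length w2 \<le> 2 * h + 2" using a(3,4) by simp
    then show "w1 = w2" using lift_inj[OF c g a(1,2) r] a(5) unfolding f_def by blast
  qed
  have inj: "inj_on f B"
    by (rule inj_onI) (use injS in \<open>auto simp: B_def\<close>)
  have bij: "bij_betw f B (gball H r h)" using inj bg by (simp add: bij_betw_def)
  define g where "g = inv_into B f"
  have bijg: "bij_betw g (gball H r h) B" unfolding g_def using bij by (rule bij_betw_inv_into)
  have f0: "f [] = r" unfolding f_def by simp
  have B0: "[] \<in> B" unfolding B_def by simp
  have g0: "g r = []" unfolding g_def using inv_into_f_f[OF inj B0] f0 by simp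
  have key: "\<And>a b. a \<in> B \<Longrightarrow> b \<in> B \<Longrightarrow> (f a, f b) \<in> edges H \<longleftrightarrow> (a, b) \<in> edges (nb_tree G v)"
  proof -
    fix a b assume a: "a \<in> B" and b: "b \<in> B"
    have na: "nbw G (v # a)" "length a \<le> h" and nb: "nbw G (v # b)" "length b \<le> h" using a b by (auto simp: B_def)
    show "(f a, f b) \<in> edges H \<longleftrightarrow> (a, b) \<in> edges (nb_tree G v)"
    proof
      assume e: "(f a, f b) \<in> edges H"
      obtain w' where w': "nbw G (v # w')" "lw H p r w' = f b"
        and o: "w' = a @ [p (f b)] \<or> a = w' @ [last (v # a)]"
        using step_lemma[OF c na(1) r, of "f b"] e unfolding f_def by blast
      have "length w' \<le> Suc (length a)" using o
      proof
        assume "w' = a @ [p (f b)]" then show ?thesis by simp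
      next
        assume "a = w' @ [last (v # a)]"
        then have "length a = Suc (length w')" by (metis length_append_singleton)
        then show ?thesis by simp
      qed
      then have "w' = b" using injS[OF w'(1) nb(1)] w'(2) na(2) nb(2) unfolding f_def by simp
      then show "(a, b) \<in> edges (nb_tree G v)" using o na nb by (auto simp: tree_edges)
    next
      assume "(a, b) \<in> edges (nb_tree G v)"
      then have "(\<exists>x. b = a @ [x]) \<or> (\<exists>x. a = b @ [x])" by (simp add: tree_edges)
      then show "(f a, f b) \<in> edges H"
      proof
        assume "\<exists>x. b = a @ [x]"
        then obtain x where x: "b = a @ [x]" by blast
        show ?thesis using lift_edge[OF c r, of a x] nb(1) x unfolding f_def by simp
      next
        assume "\<exists>x. a = b @ [x]"
        then obtain x where x: "a = b @ [x]" by blast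
        have "(f b, f a) \<in> edges H" using lift_edge[OF c r, of b x] na(1) x unfolding f_def by simp
        then show ?thesis using s by (simp add: sym_def)
      qed
    qed
  qed
  show ?thesis unfolding ball_iso_def
  proof (intro exI[of _ g] conjI ballI)
    show "bij_betw g (gball H r h) (gball (nb_tree G v) [] h)" using bijg tb by simp
    show "g r = []" by (rule g0)
  next
    fix x y assume x: "x \<in> gball H r h" and y: "y \<in> gball H r h"
    have gx: "g x \<in> B" "f (g x) = x" using x bg unfolding g_def by (auto intro: inv_into_into f_inv_into_f)
    have gy: "g y \<in> B" "f (g y) = y" using y bg unfolding g_def by (auto intro: inv_into_into f_inv_into_f)
    show "(x, y) \<in> edges H \<longleftrightarrow> (g x, g y) \<in> edges (nb_tree G v)"
      using key[OF gx(1) gy(1)] gx(2) gy(2) by simp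
  qed
qed



definition prj :: "nat \<Rightarrow> 'a \<times> bool list \<Rightarrow> 'a \<times> bool list" where
  "prj d x = (fst x, drop (length (snd x) - d) (snd x))"

definition cross :: "nat \<Rightarrow> ('a \<times> bool list) \<times> ('a \<times> bool list) \<Rightarrow> ('a \<times> bool list) \<times> ('a \<times> bool list) \<Rightarrow> bool" where
  "cross d e z = ((prj d (fst z), prj d (snd z)) = e \<or> (prj d (snd z), prj d (fst z)) = e)"

definition es :: "'v graph \<Rightarrow> ('v \<times> 'v) list" where
  "es B = (SOME l. set l = edges B)"

lemma es_set: "wfg B \<Longrightarrow> set (es B) = edges B"
proof -
  assume "wfg B"
  then have "finite (edges B)" unfolding wfg_def by (meson finite_SigmaI finite_subset)
  then have "\<exists>l. set l = edges B" by (rule finite_list)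
  then show ?thesis unfolding es_def by (rule someI_ex)
qed

primrec tst :: "'a graph \<Rightarrow> nat \<Rightarrow> ('a \<times> bool list) graph \<times> nat \<times> (('a \<times> bool list) \<times> ('a \<times> bool list)) list \<times> ('a \<times> bool list) graph" where
  "tst G 0 = (base_embed G, 0, es (base_embed G), base_embed G)"
| "tst G (Suc n) = (case tst G n of (B, d, l, H) \<Rightarrow>
     (case l of [] \<Rightarrow> (lift1 H (\<lambda>_. False), Suc n, es (lift1 H (\<lambda>_. False)), lift1 H (\<lambda>_. False))
              | e # l' \<Rightarrow> (B, d, l', lift1 H (cross d e))))"

definition tower :: "'a graph \<Rightarrow> nat \<Rightarrow> ('a \<times> bool list) graph" where
  "tower G n = snd (snd (snd (tst G n)))"

lemma Gs_Suc: "\<exists>s. (\<forall>a b. s (a,b) = s (b,a)) \<and> tower G (Suc n) = lift1 (tower G n) s"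
proof -
  obtain B d l H where S: "tst G n = (B, d, l, H)" by (metis prod.exhaust)
  show ?thesis
  proof (cases l)
    case Nil
    then show ?thesis using S by (intro exI[of _ "\<lambda>_. False"]) (simp add: tower_def)
  next
    case (Cons e l')
    have "\<forall>a b. cross d e (a,b) = cross d e (b,a)" by (auto simp: cross_def)
    then show ?thesis using S Cons by (intro exI[of _ "cross d e"]) (simp add: tower_def)
  qed
qed

lemma lift1_len: "(\<forall>x\<in>verts H. length (snd x) = n) \<Longrightarrow> x \<in> verts (lift1 H s) \<Longrightarrow> length (snd x) = Suc n"
  by (cases x) (auto simp: lift1_verts)

definition tinv :: "'a graph \<Rightarrow> nat \<Rightarrow> bool" where
  "tinv G n \<longleftrightarrow> (case tst G n of (B, d, l, H) \<Rightarrow>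
     wfg B \<and> cover B G fst \<and> (\<forall>x\<in>verts B. length (snd x) = d) \<and>
     cover H B (prj d) \<and> cover H G fst \<and> (\<forall>x\<in>verts H. length (snd x) = n) \<and>
     (\<exists>pre. pre @ l = es B \<and> d + length pre = n \<and>
        (\<forall>x y. (x,y) \<in> edges H \<longrightarrow> (\<forall>i < length pre.
            rev (snd y) ! (d + i) = (rev (snd x) ! (d + i) \<noteq> cross d (pre ! i) (x, y))))))"

lemma cover_fst_lift: "cover H G fst \<Longrightarrow> wfg H \<Longrightarrow> (\<And>a b. s (a,b) = s (b,a)) \<Longrightarrow> cover (lift1 H s) G fst"
proof -
  assume c: "cover H G fst" and w: "wfg H" and s: "\<And>a b. s (a,b) = s (b,a)"
  have "cover (lift1 H s) G (fst \<circ> pr1)" using cover_comp[OF cover_lift1[of H s, OF w s] c] .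
  then show ?thesis by (rule cover_cong) (simp add: pr1_def)
qed

lemma wfg_of_cover: "cover H G p \<Longrightarrow> wfg H" by (simp add: cover_def)

lemma base_cover:
  assumes "finite_loopless_graph G"
  shows "cover (base_embed G) G fst" and "wfg (base_embed G)"
proof -
  have V: "verts (base_embed G) = (\<lambda>x. (x, [])) ` verts G" by (simp add: base_embed_def map_graph_def)
  have E: "edges (base_embed G) = map_prod (\<lambda>x. (x, [])) (\<lambda>x. (x, [])) ` edges G"
    by (simp add: base_embed_def map_graph_def)
  have fl: "finite (verts G)" "edges G \<subseteq> verts G \<times> verts G" "sym (edges G)"
    using assms by (auto simp: finite_loopless_graph_def)
  have w: "wfg (base_embed G)" unfolding wfg_def V E using fl
    by (auto simp: sym_def)
  then show "wfg (base_embed G)" .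
  show "cover (base_embed G) G fst" unfolding cover_def
  proof (intro conjI ballI allI impI)
    show "wfg (base_embed G)" by (rule w)
    fix x assume "x \<in> verts (base_embed G)" then show "fst x \<in> verts G" unfolding V by auto
  next
    fix x y assume "(x, y) \<in> edges (base_embed G)" then show "(fst x, fst y) \<in> edges G" unfolding E by auto
  next
    fix x u assume x: "x \<in> verts (base_embed G)" and e: "(fst x, u) \<in> edges G"
    obtain a where a: "x = (a, [])" using x unfolding V by auto
    show "\<exists>!y. (x, y) \<in> edges (base_embed G) \<and> fst y = u"
    proof (rule ex1I[of _ "(u, [])"])
      show "(x, (u, [])) \<in> edges (base_embed G) \<and> fst (u, []) = u" using e a unfolding E by force
    next
      fix y assume "(x, y) \<in> edges (base_embed G) \<and> fst y = u"
      then show "y = (u, [])" unfolding E by auto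
    qed
  qed
qed



lemma prj_id: "length (snd x) = d \<Longrightarrow> prj d x = x"
  by (simp add: prj_def)

lemma prj_Cons: "length bs \<ge> d \<Longrightarrow> prj d (a, b # bs) = prj d (a, bs)"
  by (simp add: prj_def Suc_diff_le)

lemma inv_0:
  assumes "finite_loopless_graph G"
  shows "tinv G 0"
proof -
  define B where "B = base_embed G"
  have c: "cover B G fst" and w: "wfg B" using base_cover[OF assms] B_def by auto
  have len: "\<forall>x\<in>verts B. length (snd x) = 0" by (auto simp: B_def base_embed_def map_graph_def)
  have cp: "cover B B (prj 0)" using cover_id[OF w] by (rule cover_cong) (use len in \<open>simp add: prj_id\<close>)
  show ?thesis unfolding tinv_def using c w len cp by (simp add: B_def[symmetric])
qed

lemma inv_Suc:
  assumes I: "tinv G n"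
  shows "tinv G (Suc n)"
proof -
  obtain B d l H where S: "tst G n = (B, d, l, H)" by (metis prod.exhaust)
  have wB: "wfg B" and cB: "cover B G fst" and lB: "\<forall>x\<in>verts B. length (snd x) = d"
    and cH: "cover H B (prj d)" and cHG: "cover H G fst" and lH: "\<forall>x\<in>verts H. length (snd x) = n"
    using I S unfolding tinv_def by auto
  obtain pre where pre: "pre @ l = es B" "d + length pre = n"
    and bits: "\<And>x y i. (x,y) \<in> edges H \<Longrightarrow> i < length pre \<Longrightarrow>
            rev (snd y) ! (d + i) = (rev (snd x) ! (d + i) \<noteq> cross d (pre ! i) (x, y))"
    using I S unfolding tinv_def by auto
  have wH: "wfg H" using cH by (rule wfg_of_cover)
  show ?thesis
  proof (cases l)
    case Nil
    define H' where "H' = lift1 H (\<lambda>_. False)"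
    have S': "tst G (Suc n) = (H', Suc n, es H', H')" using S Nil H'_def by simp
    have cl: "cover H' H pr1" unfolding H'_def by (rule cover_lift1[OF wH]) simp
    have w': "wfg H'" using cl by (rule wfg_of_cover)
    have cG: "cover H' G fst" unfolding H'_def by (rule cover_fst_lift[OF cHG wH]) simp
    have l': "\<forall>x\<in>verts H'. length (snd x) = Suc n" using lift1_len[OF lH] H'_def by blast
    have cp: "cover H' H' (prj (Suc n))" using cover_id[OF w'] by (rule cover_cong) (use l' in \<open>simp add: prj_id\<close>)
    show ?thesis unfolding tinv_def S' using w' cG l' cp by simp
  next
    case (Cons e l')
    define H' where "H' = lift1 H (cross d e)"
    have S': "tst G (Suc n) = (B, d, l', H')" using S Cons H'_def by simp
    have sy: "\<And>a b. cross d e (a,b) = cross d e (b,a)" by (auto simp: cross_def)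
    have cl: "cover H' H pr1" unfolding H'_def by (rule cover_lift1[OF wH]) (rule sy)
    have w': "wfg H'" using cl by (rule wfg_of_cover)
    have cG: "cover H' G fst" unfolding H'_def by (rule cover_fst_lift[OF cHG wH]) (rule sy)
    have l2: "\<forall>x\<in>verts H'. length (snd x) = Suc n" using lift1_len[OF lH] H'_def by blast
    have dn: "d \<le> n" using pre(2) by simp
    have cp: "cover H' B (prj d)"
    proof -
      have "cover H' B (prj d \<circ> pr1)" by (rule cover_comp[OF cl cH])
      then show ?thesis
      proof (rule cover_cong)
        fix x assume x: "x \<in> verts H'"
        obtain a ll where xa: "x = (a, ll)" by (cases x)
        then obtain b bs where bb: "ll = b # bs" "(a, bs) \<in> verts H" using x H'_def by (auto simp: lift1_verts)
        then have "length bs = n" using lH by force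
        then have "prj d (a, b # bs) = prj d (a, bs)" using dn by (intro prj_Cons) simp
        then show "prj d x = (prj d \<circ> pr1) x" using xa bb by (simp add: pr1_def)
      qed
    qed
    have bits': "\<And>x y i. (x,y) \<in> edges H' \<Longrightarrow> i < length (pre @ [e]) \<Longrightarrow>
            rev (snd y) ! (d + i) = (rev (snd x) ! (d + i) \<noteq> cross d ((pre @ [e]) ! i) (x, y))"
    proof -
      fix x y i assume e': "(x,y) \<in> edges H'" and i: "i < length (pre @ [e])"
      obtain a ll where xa: "x = (a, ll)" by (cases x)
      obtain a' ll' where ya: "y = (a', ll')" by (cases y)
      obtain b bs c cs where E: "ll = b # bs" "ll' = c # cs" "((a,bs),(a',cs)) \<in> edges H"
        "c = (b \<noteq> cross d e ((a,bs),(a',cs)))"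
        using e' xa ya H'_def by (auto simp: lift1_edges)
      have lb: "length bs = n" and lc: "length cs = n"
        using E(3) wH lH unfolding wfg_def by force+
      have cr: "\<And>f. cross d f (x, y) = cross d f ((a,bs),(a',cs))"
        using xa ya E lb lc dn by (simp add: cross_def prj_Cons)
      show "rev (snd y) ! (d + i) = (rev (snd x) ! (d + i) \<noteq> cross d ((pre @ [e]) ! i) (x, y))"
      proof (cases "i < length pre")
        case True
        have "rev (snd (a',cs)) ! (d + i) = (rev (snd (a,bs)) ! (d + i) \<noteq> cross d (pre ! i) ((a,bs),(a',cs)))"
          using bits[OF E(3) True] .
        moreover have "rev (snd y) ! (d + i) = rev cs ! (d + i)" using ya E(2) lc True pre(2)
          by (simp add: nth_append)
        moreover have "rev (snd x) ! (d + i) = rev bs ! (d + i)" using xa E(1) lb True pre(2)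
          by (simp add: nth_append)
        ultimately show ?thesis using cr True by (simp add: nth_append)
      next
        case False
        then have ii: "i = length pre" using i by simp
        have "rev (snd y) ! (d + i) = c" using ya E(2) lc ii pre(2) by (simp add: nth_append)
        moreover have "rev (snd x) ! (d + i) = b" using xa E(1) lb ii pre(2) by (simp add: nth_append)
        ultimately show ?thesis using cr ii E(4) by simp
      qed
    qed
    have pre': "(pre @ [e]) @ l' = es B" "d + length (pre @ [e]) = Suc n" using pre Cons by auto
    show ?thesis unfolding tinv_def S' using wB cB lB cp cG l2 pre' bits'
      by (simp only: prod.case) blast
  qed
qed

lemma inv_all: "finite_loopless_graph G \<Longrightarrow> tinv G n"
  by (induction n) (auto intro: inv_0 inv_Suc)



lemma nbw_take: "nbw H q \<Longrightarrow> nbw H (take k q)"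
  unfolding nbw_idx by auto

lemma nbw_drop: "nbw H q \<Longrightarrow> nbw H (drop k q)"
  unfolding nbw_idx by (auto simp: add.commute add.left_commute)

lemma distinct_closed:
  assumes g: "girth_gt B L" and n: "nbw B Q" and len: "length Q = L + 2" and ij: "i < j" "j \<le> L"
  shows "Q ! i \<noteq> Q ! j"
proof -
  define Q' where "Q' = take (j - i + 1) (drop i Q)"
  have n': "nbw B Q'" unfolding Q'_def by (intro nbw_take nbw_drop n)
  have l': "length Q' = j - i + 1" unfolding Q'_def using len ij by simp
  have "hd Q' \<noteq> last Q'" using g n' l' ij unfolding girth_gt_def by auto
  moreover have "hd Q' = Q ! i" unfolding Q'_def using len ij by (simp add: hd_conv_nth)
  moreover have "last Q' = Q ! j" unfolding Q'_def using len ij l' by (simp add: last_conv_nth Q'_def)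
  ultimately show ?thesis by simp
qed

lemma irrefl_cover: "cover B G p \<Longrightarrow> irrefl (edges G) \<Longrightarrow> (x, x) \<notin> edges B"
  unfolding cover_def irrefl_def by blast

lemma stage_end:
  assumes fl: "finite_loopless_graph G" and I: "tinv G m" and S: "tst G m = (B, d, [], H)"
    and g: "girth_gt B L"
  shows "girth_gt H (Suc L)"
proof -
  have cB: "cover B G fst" and wB: "wfg B" and cH: "cover H B (prj d)"
    using I S unfolding tinv_def by auto
  obtain pre where pre: "pre = es B"
    and bits: "\<And>x y i. (x,y) \<in> edges H \<Longrightarrow> i < length pre \<Longrightarrow>
            rev (snd y) ! (d + i) = (rev (snd x) ! (d + i) \<noteq> cross d (pre ! i) (x, y))"
    using I S unfolding tinv_def by auto
  have irr: "\<And>x. (x, x) \<notin> edges B" using irrefl_cover[OF cB] fl by (simp add: finite_loopless_graph_def)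
  show ?thesis unfolding girth_gt_def
  proof (intro allI impI notI)
    fix q assume q: "nbw H q \<and> 2 \<le> length q \<and> length q \<le> Suc (Suc L)" and hl: "hd q = last q"
    define Q where "Q = map (prj d) q"
    have nQ: "nbw B Q" unfolding Q_def using nbw_map[OF cH] q by simp
    have hlQ: "hd Q = last Q" unfolding Q_def using hl q by (cases q) (auto simp: last_map)
    have lenQ: "length Q = length q" unfolding Q_def by simp
    have lq: "length q = L + 2"
    proof (rule ccontr)
      assume "length q \<noteq> L + 2"
      then have "length Q \<le> Suc L" using q lenQ by simp
      then show False using g nQ hlQ q lenQ unfolding girth_gt_def by auto
    qed
    have Qi: "\<And>i. i < length q \<Longrightarrow> Q ! i = prj d (q ! i)" unfolding Q_def by simp
    have Qne: "Q \<noteq> []" using lq lenQ by auto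
    have hQ: "Q ! 0 = Q ! (L + 1)" using hlQ lq lenQ hd_conv_nth[OF Qne] last_conv_nth[OF Qne] by simp
    have edgeQ: "\<And>i. Suc i < length Q \<Longrightarrow> (Q ! i, Q ! Suc i) \<in> edges B" using nQ unfolding nbw_idx by blast
    have nbQ: "\<And>i. i + 2 < length Q \<Longrightarrow> Q ! (i + 2) \<noteq> Q ! i" using nQ unfolding nbw_idx by blast
    have L2: "L \<ge> 2"
    proof (rule ccontr)
      assume "\<not> L \<ge> 2"
      then have "L = 0 \<or> L = 1" by auto
      then show False
      proof
        assume "L = 0"
        then show False using edgeQ[of 0] hQ irr lq lenQ by simp
      next
        assume "L = 1"
        then show False using nbQ[of 0] hQ lq lenQ by simp
      qed
    qed
    have dist: "\<And>i j. i < j \<Longrightarrow> j \<le> L \<Longrightarrow> Q ! i \<noteq> Q ! j"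
      using distinct_closed[OF g nQ] lq lenQ by simp
    define e0 where "e0 = (Q ! 0, Q ! 1)"
    have "e0 \<in> edges B" unfolding e0_def using edgeQ[of 0] lq lenQ by simp
    then have "e0 \<in> set pre" using es_set[OF wB] pre by simp
    then obtain j0 where j0: "j0 < length pre" "pre ! j0 = e0" by (meson in_set_conv_nth)
    define bit where "bit x = rev (snd x) ! (d + j0)" for x :: "'a \<times> bool list"
    have edgeq: "\<And>t. Suc t < length q \<Longrightarrow> (q ! t, q ! Suc t) \<in> edges H" using q unfolding nbw_idx by blast
    have flip: "\<And>t. t \<le> L \<Longrightarrow> bit (q ! Suc t) = (bit (q ! t) \<noteq> ((Q ! t, Q ! Suc t) = e0 \<or> (Q ! Suc t, Q ! t) = e0))"
    proof -
      fix t assume t: "t \<le> L"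
      have "bit (q ! Suc t) = (bit (q ! t) \<noteq> cross d e0 (q ! t, q ! Suc t))"
        unfolding bit_def using bits[OF edgeq j0(1)] j0(2) t lq by simp
      moreover have "cross d e0 (q ! t, q ! Suc t) = ((Q ! t, Q ! Suc t) = e0 \<or> (Q ! Suc t, Q ! t) = e0)"
        unfolding cross_def using Qi t lq by simp
      ultimately show "bit (q ! Suc t) = (bit (q ! t) \<noteq> ((Q ! t, Q ! Suc t) = e0 \<or> (Q ! Suc t, Q ! t) = e0))" by simp
    qed
    have f0: "bit (q ! 1) = (\<not> bit (q ! 0))" using flip[of 0] e0_def by simp
    have fno: "\<And>t. 1 \<le> t \<Longrightarrow> t \<le> L \<Longrightarrow> bit (q ! Suc t) = bit (q ! t)"
    proof -
      fix t assume t: "1 \<le> t" "t \<le> L"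
      have a: "(Q ! t, Q ! Suc t) \<noteq> e0" using dist[of 0 t] t unfolding e0_def by auto
      have b: "(Q ! Suc t, Q ! t) \<noteq> e0"
      proof
        assume "(Q ! Suc t, Q ! t) = e0"
        then have x1: "Q ! Suc t = Q ! 0" and x2: "Q ! t = Q ! 1" unfolding e0_def by auto
        show False
        proof (cases "t = 1")
          case True
          then show False using x1 dist[of 0 2] L2 by (simp add: numeral_2_eq_2)
        next
          case False
          then show False using x2 dist[of 1 t] t by simp
        qed
      qed
      show "bit (q ! Suc t) = bit (q ! t)" using flip[OF t(2)] a b by simp
    qed
    have same: "\<And>t. 1 \<le> t \<Longrightarrow> t \<le> Suc L \<Longrightarrow> bit (q ! t) = bit (q ! 1)"
    proof -
      fix t show "1 \<le> t \<Longrightarrow> t \<le> Suc L \<Longrightarrow> bit (q ! t) = bit (q ! 1)"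
      proof (induction t)
        case 0 then show ?case by simp
      next
        case (Suc t)
        show ?case
        proof (cases "t = 0")
          case True then show ?thesis by simp
        next
          case False
          then have "bit (q ! t) = bit (q ! 1)" using Suc by simp
          moreover have "bit (q ! Suc t) = bit (q ! t)" using fno[of t] False Suc.prems by simp
          ultimately show ?thesis by simp
        qed
      qed
    qed
    have qne: "q \<noteq> []" using lq by auto
    have "q ! 0 = q ! (Suc L)" using hl lq hd_conv_nth[OF qne] last_conv_nth[OF qne] by simp
    then have "bit (q ! 0) = bit (q ! 1)" using same[of "Suc L"] by simp
    then show False using f0 by simp
  qed
qed



lemma st_run: "tst G n = (B, d, l, H) \<Longrightarrow> k \<le> length l \<Longrightarrow> \<exists>H'. tst G (n + k) = (B, d, drop k l, H')"
proof (induction k)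
  case 0 then show ?case by simp
next
  case (Suc k)
  then obtain H' where S: "tst G (n + k) = (B, d, drop k l, H')" by auto
  have "drop k l \<noteq> []" using Suc.prems by simp
  then obtain e l' where dk: "drop k l = e # l'" by (cases "drop k l") auto
  have "drop (Suc k) l = l'" using dk by (metis drop_Suc tl_drop list.sel(3))
  then show ?case using S dk by simp
qed

lemma Gs_cover_suc: "finite_loopless_graph G \<Longrightarrow> \<exists>p. cover (tower G (Suc n)) (tower G n) p"
proof -
  assume fl: "finite_loopless_graph G"
  obtain s where s: "\<forall>a b. s (a,b) = s (b,a)" and s2: "tower G (Suc n) = lift1 (tower G n) s"
    using Gs_Suc[of G n] by (elim exE conjE) (rule that)
  have I: "tinv G n" using fl by (rule inv_all)
  obtain B d l H where S: "tst G n = (B, d, l, H)" by (metis prod.exhaust)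
  have "cover H G fst" using I S unfolding tinv_def by auto
  moreover have "tower G n = H" using S by (simp add: tower_def)
  ultimately have "cover (tower G n) G fst" by simp
  then have "wfg (tower G n)" by (rule wfg_of_cover)
  then have "cover (lift1 (tower G n) s) (tower G n) pr1" using s by (intro cover_lift1) auto
  then have "cover (tower G (Suc n)) (tower G n) pr1" using s2 by simp
  then show ?thesis by blast
qed

lemma girth_mono_n: "finite_loopless_graph G \<Longrightarrow> girth_gt (tower G n) L \<Longrightarrow> girth_gt (tower G (n + k)) L"
proof (induction k)
  case 0 then show ?case by simp
next
  case (Suc k)
  obtain p where "cover (tower G (Suc (n + k))) (tower G (n + k)) p" using Gs_cover_suc[OF Suc.prems(1)] by blast
  then show ?case using girth_mono Suc by simp
qed

lemma grow:
  assumes fl: "finite_loopless_graph G" and g: "girth_gt (tower G N) L"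
  shows "\<exists>N' \<ge> N. girth_gt (tower G N') (Suc L)"
proof -
  obtain B d l H where S: "tst G N = (B, d, l, H)" by (metis prod.exhaust)
  obtain H1 where S1: "tst G (N + length l) = (B, d, [], H1)" using st_run[OF S, of "length l"] by auto
  define m where "m = N + length l"
  define H2 where "H2 = lift1 H1 (\<lambda>_. False)"
  have S2: "tst G (Suc m) = (H2, Suc m, es H2, H2)" using S1 m_def H2_def by simp
  have g2: "girth_gt H2 L"
  proof -
    have "girth_gt (tower G (N + (Suc (length l)))) L" by (rule girth_mono_n[OF fl g])
    then show ?thesis using S2 m_def by (simp add: tower_def)
  qed
  obtain H3 where S3: "tst G (Suc m + length (es H2)) = (H2, Suc m, [], H3)"
    using st_run[OF S2, of "length (es H2)"] by auto
  have "girth_gt H3 (Suc L)" by (rule stage_end[OF fl inv_all[OF fl] S3 g2])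
  then show ?thesis using S3 m_def by (intro exI[of _ "Suc m + length (es H2)"]) (simp add: tower_def)
qed

lemma girth_eventually:
  assumes fl: "finite_loopless_graph G"
  shows "\<exists>N. \<forall>n\<ge>N. girth_gt (tower G n) L"
proof (induction L)
  case 0 then show ?case using girth_zero by blast
next
  case (Suc L)
  then obtain N where "girth_gt (tower G N) L" by blast
  then obtain N' where "girth_gt (tower G N') (Suc L)" using grow[OF fl] by blast
  then have "\<forall>n\<ge>N'. girth_gt (tower G n) (Suc L)" using girth_mono_n[OF fl] by (metis le_add_diff_inverse)
  then show ?case by blast
qed

lemma dist_bound:
  assumes "ball_iso H r T t h"
  shows "gstar_dist H r T t \<le> 1 / (1 + real h) \<and> 0 \<le> gstar_dist H r T t"
proof -
  define S where "S = {enat h | h. ball_iso H r T t h}"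
  have hS: "enat h \<in> S" using assms S_def by blast
  then have le: "enat h \<le> Sup S" by (rule Sup_upper)
  show ?thesis
  proof (cases "Sup S = \<infinity>")
    case True
    then show ?thesis unfolding gstar_dist_def Let_def S_def[symmetric] by simp
  next
    case False
    then obtain k where k: "Sup S = enat k" by (cases "Sup S") auto
    then have "h \<le> k" using le by simp
    then have "1 / (1 + real k) \<le> 1 / (1 + real h)" by (simp add: frac_le)
    then show ?thesis unfolding gstar_dist_def Let_def S_def[symmetric] using k by simp
  qed
qed



lemma Gs_cover_G: "finite_loopless_graph G \<Longrightarrow> cover (tower G n) G fst"
proof -
  assume fl: "finite_loopless_graph G"
  have I: "tinv G n" using fl by (rule inv_all)
  obtain B d l H where S: "tst G n = (B, d, l, H)" by (metis prod.exhaust)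
  have "cover H G fst" using I S unfolding tinv_def by auto
  moreover have "tower G n = H" using S by (simp add: tower_def)
  ultimately show ?thesis by simp
qed

theorem proposition4p12:
  fixes G :: "'a graph"
  assumes "finite_loopless_graph G"
  shows "\<exists>Gs :: nat \<Rightarrow> ('a \<times> bool list) graph.
           Gs 0 = base_embed G \<and>
           (\<forall>n. is_two_lift_of (Gs (Suc n)) (Gs n)) \<and>
           (\<forall>v \<in> verts G. \<forall>vs :: nat \<Rightarrow> 'a \<times> bool list.
              (\<forall>n. vs n \<in> verts (Gs n) \<and> fst (vs n) = v) \<longrightarrow>
              (\<lambda>n. gstar_dist (Gs n) (vs n) (nb_tree G v) []) \<longlonglongrightarrow> 0)"
proof (intro exI[of _ "tower G"] conjI allI ballI impI)
  show "tower G 0 = base_embed G" by (simp add: tower_def)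
next
  fix n
  obtain s where s: "\<forall>a b. s (a,b) = s (b,a)" and s2: "tower G (Suc n) = lift1 (tower G n) s"
    using Gs_Suc[of G n] by (elim exE conjE) (rule that)
  show "is_two_lift_of (tower G (Suc n)) (tower G n)"
    unfolding is_two_lift_of_def using s s2 by (auto simp: lift1_def)
next
  fix v vs assume v: "v \<in> verts G" and vs: "\<forall>n. vs n \<in> verts (tower G n) \<and> fst (vs n) = v"
  show "(\<lambda>n. gstar_dist (tower G n) (vs n) (nb_tree G v) []) \<longlonglongrightarrow> 0"
  proof (rule LIMSEQ_I)
    fix r :: real assume r: "0 < r"
    obtain h :: nat where h: "1 / r < real h" using reals_Archimedean2 by blast
    have hr: "1 / (1 + real h) < r"
    proof -
      have "1 < r * real h" using h r by (simp add: field_simps)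
      then have "1 < r * (1 + real h)" using r by (simp add: algebra_simps)
      then show ?thesis using r by (simp add: field_simps)
    qed
    obtain N where N: "\<forall>n\<ge>N. girth_gt (tower G n) (2 * h + 2)" using girth_eventually[OF assms] by blast
    show "\<exists>no. \<forall>n\<ge>no. norm (gstar_dist (tower G n) (vs n) (nb_tree G v) [] - 0) < r"
    proof (intro exI[of _ N] allI impI)
      fix n assume n: "N \<le> n"
      have "ball_iso (tower G n) (vs n) (nb_tree G v) [] h"
        using ball_iso_lemma[OF Gs_cover_G[OF assms] N[rule_format, OF n]] vs by blast
      then have "gstar_dist (tower G n) (vs n) (nb_tree G v) [] \<le> 1 / (1 + real h) \<and>
          0 \<le> gstar_dist (tower G n) (vs n) (nb_tree G v) []" by (rule dist_bound)
      then show "norm (gstar_dist (tower G n) (vs n) (nb_tree G v) [] - 0) < r" using hr by simp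
    qed
  qed
qed


end
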